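(* Consider the following Naive Uniform Elimination algorithm on a stream of $K$ arms, with input parameters $\varepsilon\in(0,1)$ and $\delta\in(0,1)$: maintain a single stored arm and a best empirical reward $\widehat{\mu}^*$ initialized to $0$; for each arriving $\mathsf{arm}_i$, pull it $\frac{16}{\varepsilon^2}\log(\frac{K}{\delta})$ times and record its empirical mean reward $\widehat{\mu}_i$; if $\widehat{\mu}_i>\widehat{\mu}^*$, discard the stored arm, store $\mathsf{arm}_i$ and set $\widehat{\mu}^*=\widehat{\mu}_i$; otherwise discard $\mathsf{arm}_i$ and keep the stored arm; at the end of the stream return the stored arm $\overline{\mathsf{arm}}$. Then for every integer $c\geq 1$, the returned arm has mean reward \[\mu_{\overline{\mathsf{arm}}}\geq \mu^*-c\cdot\varepsilon\] with probability at least $1-\left(\tfrac{1}{2}\right)^{c^2}\cdot\delta$.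
   Context: There are $K$ arms arriving one by one in a stream; each arm has an unknown reward distribution supported on $[0,1]$ with mean $\mu_i$, pulls give independent samples, and $\mu^*=\max_i\mu_i$. *)

theory Defs
  imports "HOL-Probability.Probability"
begin

definition nue_pulls :: "nat \<Rightarrow> real \<Rightarrow> real \<Rightarrow> nat" where
  "nue_pulls K eps delta = nat \<lceil>16 / eps ^ 2 * ln (real K / delta)\<rceil>"

text \<open>Sample space outcome: omega (i, j) is the reward of the j-th pull of arm i.
  Empirical mean of arm i after N pulls.\<close>
definition emp_mean :: "nat \<Rightarrow> (nat \<times> nat \<Rightarrow> real) \<Rightarrow> nat \<Rightarrow> real" where
  "emp_mean N omega i = (\<Sum>j<N. omega (i, j)) / real N"

text \<open>One step of Naive Uniform Elimination: state = (stored arm, best empirical reward).\<close>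
definition nue_step :: "nat \<Rightarrow> (nat \<times> nat \<Rightarrow> real) \<Rightarrow> nat \<Rightarrow> nat \<times> real \<Rightarrow> nat \<times> real" where
  "nue_step N omega i st =
     (if emp_mean N omega i > snd st then (i, emp_mean N omega i) else st)"

text \<open>Output of the algorithm on arms 0,...,K-1 arriving in this order; best empirical
  reward initialised to 0, stored arm initialised to the first arm (arm 0).\<close>
definition nue_output :: "nat \<Rightarrow> nat \<Rightarrow> (nat \<times> nat \<Rightarrow> real) \<Rightarrow> nat" where
  "nue_output K N omega = fst (fold (nue_step N omega) [0..<K] (0, 0))"

definition pulls_space :: "nat \<Rightarrow> nat \<Rightarrow> (nat \<Rightarrow> real measure) \<Rightarrow> (nat \<times> nat \<Rightarrow> real) measure" where
  "pulls_space K N D = PiM ({..<K} \<times> {..<N}) (\<lambda>(i, j). D i)"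

definition arm_mean :: "(nat \<Rightarrow> real measure) \<Rightarrow> nat \<Rightarrow> real" where
  "arm_mean D i = integral\<^sup>L (D i) (\<lambda>x. x)"

end

theory Submission
  imports Defs
begin


lemma comp_meas:
  fixes D' :: "nat \<Rightarrow> real measure"
  assumes "\<And>i. sets (D' i) = sets borel" "k < K" "j < N"
  shows "(\<lambda>\<omega>. \<omega> (k, j)) \<in> borel_measurable (PiM ({..<K}\<times>{..<N}) (\<lambda>(i,j). D' i))"
proof -
  have "(\<lambda>\<omega>. \<omega> (k, j)) \<in> measurable (PiM ({..<K}\<times>{..<N}) (\<lambda>(i,j). D' i)) ((\<lambda>(i,j). D' i) (k,j))"
    by (rule measurable_component_singleton) (use assms in auto)
  then show ?thesis using measurable_cong_sets[OF refl assms(1)[of k]] by (metis case_prod_conv)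
qed

lemma hoeff_arm:
  fixes D' :: "nat \<Rightarrow> real measure"
  assumes P: "\<And>i. prob_space (D' i)" and S: "\<And>i. sets (D' i) = sets borel"
    and AE: "\<And>i. AE x in D' i. 0 \<le> x \<and> x \<le> 1" and i: "i < K" and N: "N > 0" and t: "t \<ge> 0"
  shows "measure (PiM ({..<K}\<times>{..<N}) (\<lambda>(i,j). D' i))
     {\<omega> \<in> space (PiM ({..<K}\<times>{..<N}) (\<lambda>(i,j). D' i)). \<bar>emp_mean N \<omega> i - arm_mean D' i\<bar> \<ge> t}
     \<le> 2 * exp (-2 * real N * t^2)"
proof -
  define M' where "M' = (\<lambda>(i::nat,j::nat). D' i)"
  define Pm where "Pm = PiM ({..<K}\<times>{..<N}) M'"
  interpret pp: product_prob_space M'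
    by (rule product_prob_spaceI) (auto simp: M'_def P split: prod.splits)
  interpret prob_space Pm unfolding Pm_def
    by (rule prob_space_PiM) (auto simp: M'_def P split: prod.splits)
  have cm: "(\<lambda>\<omega>. \<omega> (i, j)) \<in> borel_measurable Pm" if "j < N" for j
    unfolding Pm_def M'_def by (rule comp_meas[OF S i that])
  have dc: "distr Pm borel (\<lambda>\<omega>. \<omega> (i, j)) = D' i" if "j < N" for j
  proof -
    have "distr Pm borel (\<lambda>\<omega>. \<omega> (i, j)) = distr Pm (M' (i,j)) (\<lambda>\<omega>. \<omega> (i, j))"
      by (rule distr_cong) (auto simp: M'_def S)
    also have "\<dots> = M' (i,j)" unfolding Pm_def
      by (rule distr_PiM_component) (use i that in \<open>auto simp: M'_def P\<close>)
    finally show ?thesis by (simp add: M'_def)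
  qed
  interpret H: Hoeffding_ineq_iid Pm "{..<N}" "\<lambda>j \<omega>. \<omega> (i, j)" "\<lambda>\<omega>. \<omega> (i, 0)" 0 1 "arm_mean D' i"
  proof unfold_locales
    show "finite {..<N}" by simp
  next
    show "indep_vars (\<lambda>_. borel) (\<lambda>j \<omega>. \<omega> (i, j)) {..<N}"
    proof (subst indep_vars_iff_distr_eq_PiM')
      show "{..<N} \<noteq> {}" using N by auto
      show "random_variable borel (\<lambda>\<omega>. \<omega> (i, j))" if "j \<in> {..<N}" for j using cm that by auto
      have "distr Pm (Pi\<^sub>M {..<N} (\<lambda>_. borel)) (\<lambda>x. \<lambda>j\<in>{..<N}. x (i, j))
          = distr Pm (Pi\<^sub>M {..<N} (\<lambda>j. M' (i,j))) (\<lambda>x. \<lambda>j\<in>{..<N}. x (i, j))"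
        by (rule distr_cong) (auto intro!: sets_PiM_cong simp: M'_def S)
      also have "\<dots> = Pi\<^sub>M {..<N} (\<lambda>j. M' (i,j))" unfolding Pm_def
        by (rule pp.distr_reorder) (use i in \<open>auto simp: inj_on_def\<close>)
      also have "\<dots> = Pi\<^sub>M {..<N} (\<lambda>j. distr Pm borel (\<lambda>\<omega>. \<omega> (i, j)))"
        by (rule PiM_cong) (auto simp: dc M'_def)
      finally show "distr Pm (Pi\<^sub>M {..<N} (\<lambda>_. borel)) (\<lambda>x. \<lambda>j\<in>{..<N}. x (i, j))
          = Pi\<^sub>M {..<N} (\<lambda>j. distr Pm borel (\<lambda>\<omega>. \<omega> (i, j)))" .
    qed
  next
    show "distr Pm borel (\<lambda>\<omega>. \<omega> (i, j)) = distr Pm borel (\<lambda>\<omega>. \<omega> (i, 0))" if "j \<in> {..<N}" for j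
      using dc that N by auto
  next
    show "random_variable borel (\<lambda>\<omega>. \<omega> (i, 0))" using cm N by auto
  next
    have M0: "M' (i,0) = D' i" by (simp add: M'_def)
    have A: "AE x in M' (i,0). 0 \<le> x \<and> x \<le> 1" using AE[of i] M0 by metis
    have "AE \<omega> in Pm. 0 \<le> \<omega> (i,0) \<and> \<omega> (i,0) \<le> 1" unfolding Pm_def
      by (rule AE_PiM_component[where M=M' and i="(i,0)" and P="\<lambda>x. 0 \<le> x \<and> x \<le> 1", OF _ _ A]) (use i N in \<open>auto simp: P M'_def\<close>)
    then show "AE \<omega> in Pm. \<omega> (i, 0) \<in> {0..1}" by auto
  next
    have "expectation (\<lambda>\<omega>. \<omega> (i, 0)) = integral\<^sup>L (distr Pm borel (\<lambda>\<omega>. \<omega> (i, 0))) (\<lambda>x. x)"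
      by (rule integral_distr[symmetric]) (use cm N in auto)
    then show "arm_mean D' i \<equiv> expectation (\<lambda>\<omega>. \<omega> (i, 0))"
      using dc[of 0] N by (simp add: arm_mean_def)
  qed
  have "prob {x \<in> space Pm. \<bar>(\<Sum>j\<in>{..<N}. x (i, j)) / real (card {..<N}) - arm_mean D' i\<bar> \<ge> t}
        \<le> 2 * exp (-2 * real (card {..<N}) * t\<^sup>2 / (1 - 0)\<^sup>2)"
    by (rule H.Hoeffding_ineq_abs_ge') (use t N in auto)
  then show ?thesis by (simp add: Pm_def M'_def emp_mean_def)
qed



lemma fold_inv:
  "snd (fold (nue_step N \<omega>) [0..<k] (0,0)) \<ge> 0 \<and>
   (\<forall>i<k. emp_mean N \<omega> i \<le> snd (fold (nue_step N \<omega>) [0..<k] (0,0))) \<and>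
   ((fst (fold (nue_step N \<omega>) [0..<k] (0,0)) < k \<and>
     snd (fold (nue_step N \<omega>) [0..<k] (0,0)) = emp_mean N \<omega> (fst (fold (nue_step N \<omega>) [0..<k] (0,0))))
    \<or> (fst (fold (nue_step N \<omega>) [0..<k] (0,0)) = 0 \<and> snd (fold (nue_step N \<omega>) [0..<k] (0,0)) = 0))"
proof (induction k)
  case 0
  then show ?case by simp
next
  case (Suc k)
  obtain a m where am: "fold (nue_step N \<omega>) [0..<k] (0,0) = (a, m)" by fastforce
  have eq: "fold (nue_step N \<omega>) [0..<Suc k] (0,0) = nue_step N \<omega> k (a, m)" using am by simp
  show ?case
  proof (cases "emp_mean N \<omega> k > m")
    case True
    then show ?thesis using Suc.IH unfolding eq am
      by (auto simp: nue_step_def less_Suc_eq)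
  next
    case False
    then show ?thesis using Suc.IH unfolding eq am
      by (auto simp: nue_step_def less_Suc_eq)
  qed
qed



lemma meas_fold:
  assumes "\<And>i. i < k \<Longrightarrow> (\<lambda>\<omega>. emp_mean N \<omega> i) \<in> borel_measurable M"
  shows "(\<lambda>\<omega>. fst (fold (nue_step N \<omega>) [0..<k] (0,0))) \<in> measurable M (count_space UNIV) \<and>
         (\<lambda>\<omega>. snd (fold (nue_step N \<omega>) [0..<k] (0,0))) \<in> borel_measurable M"
  using assms
proof (induction k)
  case 0
  then show ?case by simp
next
  case (Suc k)
  have f[measurable]: "(\<lambda>\<omega>. fst (fold (nue_step N \<omega>) [0..<k] (0,0))) \<in> measurable M (count_space UNIV)"
    and g[measurable]: "(\<lambda>\<omega>. snd (fold (nue_step N \<omega>) [0..<k] (0,0))) \<in> borel_measurable M"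
    using Suc by auto
  have e[measurable]: "(\<lambda>\<omega>. emp_mean N \<omega> k) \<in> borel_measurable M" using Suc by auto
  have S: "{\<omega> \<in> space M. snd (fold (nue_step N \<omega>) [0..<k] (0,0)) < emp_mean N \<omega> k} \<in> sets M"
    by measurable
  have eq1: "(\<lambda>\<omega>. fst (fold (nue_step N \<omega>) [0..<Suc k] (0,0))) =
     (\<lambda>\<omega>. if snd (fold (nue_step N \<omega>) [0..<k] (0,0)) < emp_mean N \<omega> k then k else fst (fold (nue_step N \<omega>) [0..<k] (0,0)))"
    by (rule ext) (simp add: nue_step_def)
  have eq2: "(\<lambda>\<omega>. snd (fold (nue_step N \<omega>) [0..<Suc k] (0,0))) =
     (\<lambda>\<omega>. if snd (fold (nue_step N \<omega>) [0..<k] (0,0)) < emp_mean N \<omega> k then emp_mean N \<omega> k else snd (fold (nue_step N \<omega>) [0..<k] (0,0)))"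
    by (rule ext) (simp add: nue_step_def)
  show ?case unfolding eq1 eq2
    by (intro conjI measurable_If S f g e) simp
qed



lemma numeric:
  fixes K c :: nat and eps delta N :: real
  assumes "K \<ge> 2" "0 < eps" "0 < delta" "delta < 1" "c \<ge> 1"
    and N: "N \<ge> 16 / eps^2 * ln (real K / delta)"
  shows "real K * (2 * exp (-2 * N * (real c * eps / 2)^2)) \<le> (1/2)^(c^2) * delta"
proof -
  define L where "L = ln (real K / delta)"
  define C where "C = real c ^ 2"
  have C1: "C \<ge> 1" using assms by (simp add: C_def)
  have Kd: "real K / delta \<ge> 2"
  proof -
    have "real K / delta \<ge> real K" using assms by (simp add: field_simps)
    then show ?thesis using assms by linarith
  qed
  have L2: "L \<ge> ln 2" unfolding L_def using Kd by simp
  have Lpos: "L > 0" using L2 by (smt (verit) ln_gt_zero_iff)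
  have h1: "2 * N * (real c * eps / 2)^2 \<ge> 8 * C * L"
  proof -
    have "2 * N * (real c * eps / 2)^2 = N * (C * eps^2 / 2)" by (simp add: C_def power2_eq_square field_simps)
    also have "\<dots> \<ge> (16 / eps^2 * L) * (C * eps^2 / 2)"
      using N assms by (intro mult_right_mono) (auto simp: L_def C_def)
    also have "(16 / eps^2 * L) * (C * eps^2 / 2) = 8 * C * L" using assms by (simp add: field_simps)
    finally show ?thesis .
  qed
  have h2: "exp (-2 * N * (real c * eps / 2)^2) \<le> exp (-(8 * C * L))" using h1 by simp
  have h3: "exp (-L) = delta / real K"
    using assms by (simp add: L_def exp_minus field_simps)
  have h4: "exp ((8 * C - 1) * L) \<ge> 2 * 2 ^ (c^2)"
  proof -
    have "exp ((8 * C - 1) * L) \<ge> exp ((8 * C - 1) * ln 2)"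
      using L2 C1 by (intro exp_mono mult_left_mono) auto
    also have "exp ((8 * C - 1) * ln 2) = 2 powr (8 * C - 1)" by (simp add: powr_def)
    also have "2 powr (8 * C - 1) \<ge> 2 powr (C + 1)" using C1 by (intro powr_mono) auto
    also have "C + 1 = real (c^2 + 1)" by (simp add: C_def)
    also have "2 powr real (c^2 + 1) = 2 ^ (c^2 + 1)" by (rule powr_realpow) simp
    also have "(2::real) ^ (c^2 + 1) = 2 * 2 ^ (c^2)" by simp
    finally show ?thesis .
  qed
  have e: "exp (-(8 * C * L)) = exp (-L) / exp ((8 * C - 1) * L)"
  proof -
    have "-(8 * C * L) = -L - (8 * C - 1) * L" by (simp add: algebra_simps)
    then show ?thesis by (simp add: exp_diff)
  qed
  have "real K * (2 * exp (-2 * N * (real c * eps / 2)^2)) \<le> real K * (2 * exp (-(8 * C * L)))"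
    using h2 by (intro mult_left_mono) auto
  also have "\<dots> = 2 * delta / exp ((8 * C - 1) * L)"
  proof -
    have "real K * (2 * exp (-(8 * C * L))) = 2 * (real K * (delta / real K)) / exp ((8 * C - 1) * L)"
      unfolding e h3 by simp
    also have "real K * (delta / real K) = delta" using assms by simp
    finally show ?thesis .
  qed
  also have "\<dots> \<le> 2 * delta / (2 * 2 ^ (c^2))"
    using h4 assms by (intro divide_left_mono) auto
  also have "\<dots> = (1/2)^(c^2) * delta" by (simp add: power_one_over field_simps)
  finally show ?thesis .
qed



theorem lemma5p2:
  fixes K :: nat and D :: "nat \<Rightarrow> real measure" and eps delta :: real and c :: nat
  assumes "K \<ge> 1"
    and "0 < eps" "eps < 1" "0 < delta" "delta < 1"
    and "\<And>i. i < K \<Longrightarrow> prob_space (D i)"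
    and "\<And>i. i < K \<Longrightarrow> sets (D i) = sets borel"
    and "\<And>i. i < K \<Longrightarrow> (AE x in D i. 0 \<le> x \<and> x \<le> 1)"
    and "c \<ge> 1"
  shows "measure (pulls_space K (nue_pulls K eps delta) D)
           {omega \<in> space (pulls_space K (nue_pulls K eps delta) D).
              arm_mean D (nue_output K (nue_pulls K eps delta) omega)
                \<ge> Max (arm_mean D ` {..<K}) - real c * eps}
         \<ge> 1 - (1/2) ^ (c^2) * delta"
proof -
  note K1 = assms(1) and eps = assms(2,3) and del = assms(4,5)
    and PDa = assms(6) and SDa = assms(7) and ADa = assms(8) and c1 = assms(9)
  define N where "N = nue_pulls K eps delta"
  have Kd: "real K / delta > 1" using K1 del by (simp add: field_simps)
  have lnpos: "ln (real K / delta) > 0" using Kd by simp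
  have Nge: "real N \<ge> 16 / eps^2 * ln (real K / delta)"
    unfolding N_def nue_pulls_def by (rule real_nat_ceiling_ge)
  have Npos: "N > 0"
  proof -
    have "16 / eps^2 * ln (real K / delta) > 0" using lnpos eps by simp
    then show ?thesis using Nge by linarith
  qed
  define D' where "D' = (\<lambda>i. if i < K then D i else return borel (0::real))"
  have PD: "prob_space (D' i)" for i
    by (simp add: D'_def PDa prob_space_return)
  have SD: "sets (D' i) = sets borel" for i
    by (simp add: D'_def SDa)
  have AD: "AE x in D' i. 0 \<le> x \<and> x \<le> 1" for i
  proof (cases "i < K")
    case True
    have "D' i = D i" using True by (simp add: D'_def)
    then show ?thesis by (subst \<open>D' i = D i\<close>) (rule ADa[OF True])
  next
    case False
    have "D' i = return borel 0" using False by (simp add: D'_def)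
    then show ?thesis by (subst \<open>D' i = return borel 0\<close>) (simp add: AE_return)
  qed
  have am: "arm_mean D' i = arm_mean D i" if "i < K" for i
    using that by (simp add: arm_mean_def D'_def)
  define Pm where "Pm = PiM ({..<K}\<times>{..<N}) (\<lambda>(i,j). D' i)"
  have PS: "pulls_space K N D = Pm"
    unfolding pulls_space_def Pm_def by (rule PiM_cong) (auto simp: D'_def)
  interpret prob_space Pm unfolding Pm_def
    by (rule prob_space_PiM) (auto simp: PD split: prod.splits)
  have emp_meas: "(\<lambda>\<omega>. emp_mean N \<omega> i) \<in> borel_measurable Pm" if "i < K" for i
    unfolding emp_mean_def Pm_def
    by (intro borel_measurable_divide borel_measurable_sum borel_measurable_const comp_meas[OF SD])
       (use that in auto)
  define out where "out = (\<lambda>\<omega>. nue_output K N \<omega>)"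
  have out_meas: "out \<in> measurable Pm (count_space UNIV)"
  proof -
    have "(\<lambda>\<omega>. fst (fold (nue_step N \<omega>) [0..<K] (0,0))) \<in> measurable Pm (count_space UNIV)"
      using meas_fold[of K N Pm] emp_meas by blast
    then show ?thesis by (simp add: out_def nue_output_def)
  qed
  have am_meas[measurable]: "(\<lambda>\<omega>. arm_mean D (out \<omega>)) \<in> borel_measurable Pm"
    by (rule measurable_compose[OF out_meas]) simp
  define \<mu>s where "\<mu>s = Max (arm_mean D ` {..<K})"
  define E where "E = {\<omega> \<in> space Pm. arm_mean D (out \<omega>) \<ge> \<mu>s - real c * eps}"
  have Esets: "E \<in> sets Pm" unfolding E_def by measurable
  have goal: "measure Pm E \<ge> 1 - (1/2) ^ (c^2) * delta"
  proof (cases "K = 1")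
    case True
    have "out \<omega> = 0" for \<omega> by (simp add: out_def nue_output_def nue_step_def True)
    then have "E = space Pm" using True eps by (auto simp: E_def \<mu>s_def lessThan_Suc)
    then have "measure Pm E = 1" by (simp add: prob_space)
    then show ?thesis using del by simp
  next
    case False
    then have K2: "K \<ge> 2" using K1 by simp
    define t where "t = real c * eps / 2"
    have t0: "t \<ge> 0" using eps by (simp add: t_def)
    define B where "B = (\<lambda>i. {\<omega> \<in> space Pm. t \<le> \<bar>emp_mean N \<omega> i - arm_mean D' i\<bar>})"
    have Bsets: "B i \<in> sets Pm" if "i < K" for i
      using emp_meas[OF that] unfolding B_def by measurable
    have hb: "measure Pm (B i) \<le> 2 * exp (-2 * real N * t^2)" if "i < K" for i
      unfolding B_def Pm_def by (rule hoeff_arm[OF PD SD AD that Npos t0])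
    have "measure Pm (\<Union>i\<in>{..<K}. B i) \<le> (\<Sum>i<K. measure Pm (B i))"
      by (rule finite_measure_subadditive_finite) (use Bsets in auto)
    also have "\<dots> \<le> (\<Sum>i<K. 2 * exp (-2 * real N * t^2))"
      by (rule sum_mono) (use hb in auto)
    also have "\<dots> = real K * (2 * exp (-2 * real N * (real c * eps / 2)^2))"
      by (simp add: t_def)
    also have "\<dots> \<le> (1/2) ^ (c^2) * delta"
      by (rule numeric[OF K2 eps(1) del c1 Nge])
    finally have UB: "measure Pm (\<Union>i\<in>{..<K}. B i) \<le> (1/2) ^ (c^2) * delta" .
    have Usets: "(\<Union>i\<in>{..<K}. B i) \<in> sets Pm" using Bsets by auto
    have sub: "space Pm - (\<Union>i\<in>{..<K}. B i) \<subseteq> E"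
    proof
      fix \<omega> assume w: "\<omega> \<in> space Pm - (\<Union>i\<in>{..<K}. B i)"
      have good: "\<bar>emp_mean N \<omega> i - arm_mean D i\<bar> < t" if "i < K" for i
      proof -
        have "\<omega> \<notin> B i" using w that by auto
        then have "\<not> t \<le> \<bar>emp_mean N \<omega> i - arm_mean D' i\<bar>" using w by (simp add: B_def)
        then show ?thesis using am[OF that] by simp
      qed
      obtain istar where istar: "istar < K" "arm_mean D istar = \<mu>s"
      proof -
        have "\<mu>s \<in> arm_mean D ` {..<K}" unfolding \<mu>s_def using K1 by (intro Max_in) (auto simp: lessThan_empty_iff)
        then show ?thesis using that by auto
      qed
      define m where "m = snd (fold (nue_step N \<omega>) [0..<K] (0,0))"
      have oeq: "out \<omega> = fst (fold (nue_step N \<omega>) [0..<K] (0,0))"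
        by (simp add: out_def nue_output_def)
      have inv: "m \<ge> 0" "\<forall>i<K. emp_mean N \<omega> i \<le> m"
        "(out \<omega> < K \<and> m = emp_mean N \<omega> (out \<omega>)) \<or> (out \<omega> = 0 \<and> m = 0)"
        using fold_inv[of N \<omega> K] unfolding m_def oeq by auto
      have mu_s: "\<mu>s < m + t" using good[OF istar(1)] inv(2) istar by auto
      have "arm_mean D (out \<omega>) \<ge> \<mu>s - real c * eps"
        using inv(3)
      proof
        assume h: "out \<omega> < K \<and> m = emp_mean N \<omega> (out \<omega>)"
        then have "arm_mean D (out \<omega>) > m - t" using good[of "out \<omega>"] by auto
        then show ?thesis using mu_s by (simp add: t_def)
      next
        assume h: "out \<omega> = 0 \<and> m = 0"
        have "arm_mean D 0 \<ge> 0" unfolding arm_mean_def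
          by (rule integral_nonneg_AE) (use ADa[of 0] K1 in auto)
        moreover have "t \<le> real c * eps" using eps c1 by (simp add: t_def)
        ultimately show ?thesis using h mu_s by simp
      qed
      then show "\<omega> \<in> E" using w by (simp add: E_def)
    qed
    have "1 - (1/2) ^ (c^2) * delta \<le> 1 - measure Pm (\<Union>i\<in>{..<K}. B i)" using UB by simp
    also have "\<dots> = measure Pm (space Pm - (\<Union>i\<in>{..<K}. B i))"
      by (rule prob_compl[symmetric, OF Usets])
    also have "\<dots> \<le> measure Pm E"
      by (rule finite_measure_mono[OF sub Esets])
    finally show ?thesis .
  qed
  then show ?thesis
    unfolding N_def[symmetric] PS E_def out_def \<mu>s_def by simp
qed

end
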